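(* Let $G=(V,E)$ be a split graph. An edge $e\in E$ is split-safe (i.e., $G-e$ is a split graph) if and only if $e$ is neither the middle edge of an induced $P_4$ nor the middle edge of an induced diamond in $G$.
   Context: A split graph is a graph whose vertex set can be partitioned into a clique and an independent set. In a path $P_4$ the middle edge is the edge joining its two degree-2 vertices. A diamond is $K_4$ minus one edge; its middle edge is the edge joining its two degree-3 vertices. *)

theory Defs
  imports Main
begin

definition simple_graph :: "'a set \<Rightarrow> 'a set set \<Rightarrow> bool" where
  "simple_graph V E \<longleftrightarrow> finite V \<and>
     (\<forall>e\<in>E. \<exists>x y. x \<noteq> y \<and> x \<in> V \<and> y \<in> V \<and> e = {x, y})"

definition adj :: "'a set set \<Rightarrow> 'a \<Rightarrow> 'a \<Rightarrow> bool" where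
  "adj E x y \<longleftrightarrow> {x, y} \<in> E"

definition is_clique :: "'a set \<Rightarrow> 'a set set \<Rightarrow> 'a set \<Rightarrow> bool" where
  "is_clique V E K \<longleftrightarrow> K \<subseteq> V \<and> (\<forall>x\<in>K. \<forall>y\<in>K. x \<noteq> y \<longrightarrow> adj E x y)"

definition is_independent :: "'a set \<Rightarrow> 'a set set \<Rightarrow> 'a set \<Rightarrow> bool" where
  "is_independent V E I \<longleftrightarrow> I \<subseteq> V \<and> (\<forall>x\<in>I. \<forall>y\<in>I. \<not> adj E x y)"

definition split_graph :: "'a set \<Rightarrow> 'a set set \<Rightarrow> bool" where
  "split_graph V E \<longleftrightarrow> simple_graph V E \<and>
     (\<exists>K I. K \<union> I = V \<and> K \<inter> I = {} \<and> is_clique V E K \<and> is_independent V E I)"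

definition P4_middle :: "'a set \<Rightarrow> 'a set set \<Rightarrow> 'a \<Rightarrow> 'a \<Rightarrow> bool" where
  "P4_middle V E u v \<longleftrightarrow> (\<exists>a b. a \<in> V \<and> b \<in> V \<and> u \<in> V \<and> v \<in> V \<and> distinct [a, u, v, b] \<and>
     adj E a u \<and> adj E u v \<and> adj E v b \<and>
     \<not> adj E a v \<and> \<not> adj E u b \<and> \<not> adj E a b)"

definition diamond_middle :: "'a set \<Rightarrow> 'a set set \<Rightarrow> 'a \<Rightarrow> 'a \<Rightarrow> bool" where
  "diamond_middle V E u v \<longleftrightarrow> (\<exists>a b. a \<in> V \<and> b \<in> V \<and> u \<in> V \<and> v \<in> V \<and> distinct [a, u, v, b] \<and>
     adj E u v \<and> adj E a u \<and> adj E a v \<and> adj E b u \<and> adj E b v \<and> \<not> adj E a b)"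

end

theory Submission
  imports Defs
begin

lemma adj_sym: "adj E x y = adj E y x"
  unfolding adj_def by (simp add: insert_commute)

lemma adj_self: "simple_graph V E \<Longrightarrow> \<not> adj E x x"
  unfolding simple_graph_def adj_def by (auto simp: doubleton_eq_iff)

lemma adj_del: "adj (E - {e}) x y \<longleftrightarrow> adj E x y \<and> {x,y} \<noteq> e"
  unfolding adj_def by auto

lemma simple_del: "simple_graph V E \<Longrightarrow> simple_graph V (E - {e})"
  unfolding simple_graph_def by auto

lemma no_2K2:
  assumes "K \<union> I = V" "K \<inter> I = {}" "is_clique V E K" "is_independent V E I"
    "a \<in> V" "u \<in> V" "v \<in> V" "b \<in> V" "distinct [a,u,v,b]"
    "adj E a u" "adj E v b" "\<not> adj E a v" "\<not> adj E u b" "\<not> adj E a b" "\<not> adj E u v"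
  shows False
proof -
  have 1: "a \<in> K \<or> u \<in> K" using assms unfolding is_independent_def by blast
  have 2: "v \<in> K \<or> b \<in> K" using assms unfolding is_independent_def by blast
  have 5: "\<not> (x \<in> K \<and> y \<in> K)" if "x \<in> {a,u}" "y \<in> {v,b}" for x y
    using assms that unfolding is_clique_def by auto
  show False using 1 2 5 by blast
qed

lemma no_C4:
  assumes "K \<union> I = V" "K \<inter> I = {}" "is_clique V E K" "is_independent V E I"
    "a \<in> V" "u \<in> V" "v \<in> V" "b \<in> V" "distinct [a,u,v,b]"
    "adj E a u" "adj E a v" "adj E b u" "adj E b v" "\<not> adj E a b" "\<not> adj E u v"
  shows False
proof -
  have s: "adj E b u \<Longrightarrow> adj E u b" "adj E b v \<Longrightarrow> adj E v b" by (simp_all add: adj_sym)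
  have 1: "a \<in> K \<or> u \<in> K" using assms unfolding is_independent_def by blast
  have 2: "v \<in> K \<or> b \<in> K" using assms s unfolding is_independent_def by blast
  have 3: "u \<in> K \<or> b \<in> K" using assms s unfolding is_independent_def by blast
  have 4: "a \<in> K \<or> v \<in> K" using assms unfolding is_independent_def by blast
  have 5: "\<not> (a \<in> K \<and> b \<in> K)" "\<not> (u \<in> K \<and> v \<in> K)"
    using assms unfolding is_clique_def by auto
  show False using 1 2 3 4 5 by blast
qed

lemma core:
  assumes sg: "simple_graph V E" and KI: "K \<union> I = V" "K \<inter> I = {}"
    and cl: "is_clique V E K" and ind: "is_independent V E I"
    and uv: "u \<in> K" "v \<in> K" "u \<noteq> v" and a: "a \<in> I" "adj E u a"
    and sub: "\<forall>w\<in>I. adj E u w \<longrightarrow> adj E v w"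
    and nd: "\<not> diamond_middle V E u v"
  shows "split_graph V (E - {{u,v}})"
proof -
  have uvE: "adj E u v" using cl uv unfolding is_clique_def by auto
  have single: "\<forall>w\<in>I. adj E u w \<longrightarrow> w = a"
  proof (intro ballI impI, rule ccontr)
    fix w assume w: "w \<in> I" "adj E u w" "w \<noteq> a"
    have "\<not> adj E a w" using ind w a unfolding is_independent_def by auto
    moreover have "a \<notin> K" "w \<notin> K" using KI a w by auto
    ultimately have "diamond_middle V E u v" unfolding diamond_middle_def
      using uv a w sub uvE KI by (intro exI[of _ a] exI[of _ w]) (auto simp: adj_sym)
    with nd show False by simp
  qed
  have allK: "\<forall>c\<in>K. c \<noteq> u \<longrightarrow> adj E a c"
  proof (intro ballI impI)
    fix c assume c: "c \<in> K" "c \<noteq> u"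
    show "adj E a c"
    proof (cases "c = v")
      case True then show ?thesis using sub a by (auto simp: adj_sym)
    next
      case False
      show ?thesis
      proof (rule ccontr)
        assume nac: "\<not> adj E a c"
        have "a \<notin> K" using KI a by auto
        have "adj E c u" "adj E c v" using cl c uv False unfolding is_clique_def by auto
        hence "diamond_middle V E u v" unfolding diamond_middle_def
          using uv a c sub uvE KI nac False \<open>a \<notin> K\<close>
          by (intro exI[of _ a] exI[of _ c]) (auto simp: adj_sym)
        with nd show False by simp
      qed
    qed
  qed
  let ?K = "(K - {u}) \<union> {a}" and ?I = "(I - {a}) \<union> {u}"
  have "a \<noteq> u" "a \<noteq> v" using KI a uv by auto
  have c1: "is_clique V (E - {{u,v}}) ?K"
    unfolding is_clique_def
  proof (intro conjI ballI impI)
    show "?K \<subseteq> V" using KI a by auto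
  next
    fix p q assume pq: "p \<in> ?K" "q \<in> ?K" "p \<noteq> q"
    have "adj E p q" using pq allK cl unfolding is_clique_def by (auto simp: adj_sym)
    moreover have "{p,q} \<noteq> {u,v}" using pq \<open>a \<noteq> u\<close> \<open>a \<noteq> v\<close> by (auto simp: doubleton_eq_iff)
    ultimately show "adj (E - {{u,v}}) p q" by (simp add: adj_del)
  qed
  have i1: "is_independent V (E - {{u,v}}) ?I"
    unfolding is_independent_def
  proof (intro conjI ballI)
    show "?I \<subseteq> V" using KI uv by auto
  next
    fix p q assume pq: "p \<in> ?I" "q \<in> ?I"
    have "\<not> adj E p q"
      using pq single ind adj_self[OF sg] unfolding is_independent_def by (auto simp: adj_sym)
    then show "\<not> adj (E - {{u,v}}) p q" by (simp add: adj_del)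
  qed
  have "?K \<union> ?I = V" "?K \<inter> ?I = {}" using KI a uv \<open>a \<noteq> u\<close> by auto
  then show ?thesis unfolding split_graph_def using simple_del[OF sg] c1 i1 by blast
qed

theorem lemma4p2:
  fixes V :: "'a set" and E :: "'a set set" and e :: "'a set"
  assumes "split_graph V E" and "e \<in> E"
  shows "split_graph V (E - {e}) \<longleftrightarrow>
         \<not> (\<exists>u v. e = {u, v} \<and> (P4_middle V E u v \<or> diamond_middle V E u v))"
proof
  assume sp: "split_graph V (E - {e})"
  then obtain K I where KI: "K \<union> I = V" "K \<inter> I = {}" "is_clique V (E - {e}) K"
      "is_independent V (E - {e}) I" unfolding split_graph_def by blast
  show "\<not> (\<exists>u v. e = {u, v} \<and> (P4_middle V E u v \<or> diamond_middle V E u v))"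
  proof
    assume "\<exists>u v. e = {u, v} \<and> (P4_middle V E u v \<or> diamond_middle V E u v)"
    then obtain u v where e: "e = {u,v}" and m: "P4_middle V E u v \<or> diamond_middle V E u v" by blast
    from m show False
    proof
      assume "P4_middle V E u v"
      then obtain a b where h: "a \<in> V" "b \<in> V" "u \<in> V" "v \<in> V" "distinct [a, u, v, b]"
        "adj E a u" "adj E u v" "adj E v b" "\<not> adj E a v" "\<not> adj E u b" "\<not> adj E a b"
        unfolding P4_middle_def by blast
      show False
        apply (rule no_2K2[OF KI, of a u v b])
        using h e by (auto simp: adj_del doubleton_eq_iff)
    next
      assume "diamond_middle V E u v"
      then obtain a b where h: "a \<in> V" "b \<in> V" "u \<in> V" "v \<in> V" "distinct [a, u, v, b]"
        "adj E u v" "adj E a u" "adj E a v" "adj E b u" "adj E b v" "\<not> adj E a b"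
        unfolding diamond_middle_def by blast
      show False
        apply (rule no_C4[OF KI, of a u v b])
        using h e by (auto simp: adj_del doubleton_eq_iff)
    qed
  qed
next
  assume nm: "\<not> (\<exists>u v. e = {u, v} \<and> (P4_middle V E u v \<or> diamond_middle V E u v))"
  from assms(1) have sg: "simple_graph V E" and
    "\<exists>K I. K \<union> I = V \<and> K \<inter> I = {} \<and> is_clique V E K \<and> is_independent V E I"
    unfolding split_graph_def by auto
  then obtain K I where KI: "K \<union> I = V" "K \<inter> I = {}" and cl: "is_clique V E K"
    and ind: "is_independent V E I" by blast
  obtain x y where xy: "x \<noteq> y" "x \<in> V" "y \<in> V" "e = {x,y}"
    using sg assms(2) unfolding simple_graph_def by blast
  have exy: "adj E x y" using xy assms(2) by (simp add: adj_def)
  show "split_graph V (E - {e})"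
  proof (cases "x \<in> I \<or> y \<in> I")
    case True
    have "is_clique V (E - {e}) K"
      unfolding is_clique_def
    proof (intro conjI ballI impI)
      show "K \<subseteq> V" using cl unfolding is_clique_def by blast
    next
      fix p q assume pq: "p \<in> K" "q \<in> K" "p \<noteq> q"
      have "adj E p q" using cl pq unfolding is_clique_def by blast
      moreover have "{p,q} \<noteq> e"
      proof
        assume "{p,q} = e"
        hence "x \<in> K" "y \<in> K" using pq xy by auto
        thus False using True KI by blast
      qed
      ultimately show "adj (E - {e}) p q" by (simp add: adj_del)
    qed
    moreover have "is_independent V (E - {e}) I"
      using ind unfolding is_independent_def by (auto simp: adj_del)
    ultimately show ?thesis using KI simple_del[OF sg] unfolding split_graph_def by blast
  next
    case False
    hence xK: "x \<in> K" "y \<in> K" using KI xy by auto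
    show ?thesis
    proof (cases "\<exists>a\<in>I. adj E x a")
      case nx: False
      have "is_clique V (E - {e}) (K - {x})"
        using cl xy unfolding is_clique_def by (auto simp: adj_del)
      moreover have "is_independent V (E - {e}) (I \<union> {x})"
        using ind nx adj_self[OF sg] xK KI unfolding is_independent_def by (auto simp: adj_del adj_sym)
      moreover have "(K - {x}) \<union> (I \<union> {x}) = V" "(K - {x}) \<inter> (I \<union> {x}) = {}" using KI xK by auto
      ultimately show ?thesis using simple_del[OF sg] unfolding split_graph_def by blast
    next
      case hx: True
      show ?thesis
      proof (cases "\<exists>a\<in>I. adj E y a")
        case ny: False
        have "is_clique V (E - {e}) (K - {y})"
          using cl xy unfolding is_clique_def by (auto simp: adj_del)
        moreover have "is_independent V (E - {e}) (I \<union> {y})"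
          using ind ny adj_self[OF sg] xK KI unfolding is_independent_def by (auto simp: adj_del adj_sym)
        moreover have "(K - {y}) \<union> (I \<union> {y}) = V" "(K - {y}) \<inter> (I \<union> {y}) = {}" using KI xK by auto
        ultimately show ?thesis using simple_del[OF sg] unfolding split_graph_def by blast
      next
        case hy: True
        have "(\<forall>w\<in>I. adj E x w \<longrightarrow> adj E y w) \<or> (\<forall>w\<in>I. adj E y w \<longrightarrow> adj E x w)"
        proof (rule ccontr)
          assume "\<not> ?thesis"
          then obtain a b where ab: "a \<in> I" "adj E x a" "\<not> adj E y a" "b \<in> I" "adj E y b" "\<not> adj E x b"
            by blast
          have "a \<notin> K" "b \<notin> K" using ab KI by auto
          moreover have "\<not> adj E a b" using ind ab unfolding is_independent_def by auto
          ultimately have "P4_middle V E x y" unfolding P4_middle_def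
            using ab xy xK exy KI by (intro exI[of _ a] exI[of _ b]) (auto simp: adj_sym)
          with nm xy show False by blast
        qed
        then show ?thesis
        proof
          assume s: "\<forall>w\<in>I. adj E x w \<longrightarrow> adj E y w"
          from hx obtain a where "a \<in> I" "adj E x a" by blast
          moreover have "\<not> diamond_middle V E x y" using nm xy by blast
          ultimately show ?thesis using core[OF sg KI cl ind xK xy(1) _ _ s] xy by blast
        next
          assume s: "\<forall>w\<in>I. adj E y w \<longrightarrow> adj E x w"
          from hy obtain a where "a \<in> I" "adj E y a" by blast
          moreover have "\<not> diamond_middle V E y x" using nm xy by (metis insert_commute)
          ultimately show ?thesis using core[OF sg KI cl ind xK(2) xK(1) xy(1)[symmetric] _ _ s] xy
            by (simp add: insert_commute)
        qed
      qed
    qed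
  qed
qed

end
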